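(* Let $\Delta\ge2$ and let $G$ be a graph of maximum degree $\Delta$ with a perfect matching $M$. Then for all $z\in\mathbb C$ with \[|z|\le\sqrt{\frac{3-\sqrt5}{2(\Delta-1)\,e^{(\sqrt5-1)/2}}}\ \ \big(\approx(4.85718(\Delta-1))^{-1/2}\big),\] we have $Z_{\mathrm{pm}}(G,M,z)\neq0$, and the Taylor series of $\log Z_{\mathrm{pm}}(G,M,z)$ in $z$ about $0$ converges absolutely at $z$.
   Context: $Z_{\mathrm{pm}}(G,M,z)=\sum_{M'}z^{|M\triangle M'|}$, the sum over all perfect matchings $M'$ of $G$; it is a polynomial in $z$ with constant term $1$. *)

theory Defs
  imports "HOL-Analysis.Analysis"
begin

definition simple_graph :: "'a set \<Rightarrow> 'a set set \<Rightarrow> bool" where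
  "simple_graph V E \<longleftrightarrow> finite V \<and> (\<forall>e\<in>E. e \<subseteq> V \<and> card e = 2)"

definition degree :: "'a set set \<Rightarrow> 'a \<Rightarrow> nat" where
  "degree E v = card {e\<in>E. v \<in> e}"

definition max_degree_eq :: "'a set \<Rightarrow> 'a set set \<Rightarrow> nat \<Rightarrow> bool" where
  "max_degree_eq V E D \<longleftrightarrow> (\<forall>v\<in>V. degree E v \<le> D) \<and> (\<exists>v\<in>V. degree E v = D)"

definition perfect_matching :: "'a set \<Rightarrow> 'a set set \<Rightarrow> 'a set set \<Rightarrow> bool" where
  "perfect_matching V E M \<longleftrightarrow> M \<subseteq> E \<and>
     (\<forall>e1\<in>M. \<forall>e2\<in>M. e1 \<noteq> e2 \<longrightarrow> e1 \<inter> e2 = {}) \<and> \<Union>M = V"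

definition Zpm :: "'a set \<Rightarrow> 'a set set \<Rightarrow> 'a set set \<Rightarrow> complex \<Rightarrow> complex" where
  "Zpm V E M z = (\<Sum>M'\<in>{M'. perfect_matching V E M'}. z ^ card (M - M' \<union> (M' - M)))"

text \<open>n-th Taylor coefficient at 0 of log Z_pm (principal logarithm; Z_pm(0) = 1,
  so this is the branch of log Z_pm with value 0 at 0).\<close>
definition log_Zpm_coeff :: "'a set \<Rightarrow> 'a set set \<Rightarrow> 'a set set \<Rightarrow> nat \<Rightarrow> complex" where
  "log_Zpm_coeff V E M n = (deriv ^^ n) (\<lambda>w. Ln (Zpm V E M w)) 0 / fact n"

end

theory Submission imports Defs "HOL-Complex_Analysis.Complex_Analysis" begin

definition pmset :: "'a set set \<Rightarrow> 'a set \<Rightarrow> 'a set set set" where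
  "pmset E W = {F. F \<subseteq> E \<and> (\<forall>e1\<in>F. \<forall>e2\<in>F. e1 \<noteq> e2 \<longrightarrow> e1 \<inter> e2 = {}) \<and> \<Union>F = W}"

definition PP :: "'a set set \<Rightarrow> 'a set set \<Rightarrow> complex \<Rightarrow> 'a set \<Rightarrow> complex" where
  "PP E M x W = (\<Sum>F\<in>pmset E W. x ^ card (F - M))"

lemma pmset_empty:
  assumes "\<forall>e\<in>E. card e = 2"
  shows "pmset E {} = {{}}"
proof -
  have "{} \<notin> E" using assms by force
  then show ?thesis unfolding pmset_def by auto
qed

lemma PP_empty:
  assumes "\<forall>e\<in>E. card e = 2"
  shows "PP E M x {} = 1"
  unfolding PP_def pmset_empty[OF assms] by simp

lemma finite_pmset: "finite E \<Longrightarrow> finite (pmset E X)"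
  unfolding pmset_def by (rule rev_finite_subset[OF finite_Pow_iff[THEN iffD2]]) auto

lemma PP_rec:
  assumes finE: "finite E" and E2: "\<forall>e\<in>E. card e = 2" and u: "u \<in> W"
  shows "PP E M x W = (\<Sum>y\<in>{y\<in>W. {u,y}\<in>E}. (if {u,y}\<in>M then 1 else x) * PP E M x (W - {u,y}))"
proof -
  define N where "N = {y\<in>W. {u,y}\<in>E}"
  have finN: "finite N"
  proof -
    have "N \<subseteq> \<Union>E" unfolding N_def by auto
    moreover have "finite (\<Union>E)" using finE E2 by (metis finite_Union card.infinite zero_neq_numeral)
    ultimately show ?thesis by (rule finite_subset)
  qed
  have finP: "finite (pmset E X)" for X
    using finE unfolding pmset_def by (rule rev_finite_subset[OF finite_Pow_iff[THEN iffD2]]) auto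
  have cover: "pmset E W = (\<Union>y\<in>N. {F\<in>pmset E W. {u,y}\<in>F})"
  proof safe
    fix F assume F: "F \<in> pmset E W"
    then have "u \<in> \<Union>F" using u unfolding pmset_def by auto
    then obtain e where e: "e \<in> F" "u \<in> e" by auto
    have "e \<in> E" using F e unfolding pmset_def by auto
    then have "card e = 2" using E2 by auto
    then obtain a b where ab: "e = {a,b}" "a \<noteq> b" by (meson card_2_iff)
    then obtain y where ey: "e = {u,y}" using e by blast
    have "y \<in> W" using F e ey unfolding pmset_def by auto
    then have "y \<in> N" using \<open>e \<in> E\<close> ey unfolding N_def by auto
    then show "F \<in> (\<Union>y\<in>N. {F\<in>pmset E W. {u,y}\<in>F})" using F e ey by auto
  qed
  have disj: "{F\<in>pmset E W. {u,y}\<in>F} \<inter> {F\<in>pmset E W. {u,y'}\<in>F} = {}" if "y \<in> N" "y' \<in> N" "y \<noteq> y'" for y y'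
  proof (rule ccontr)
    assume "\<not> ?thesis"
    then obtain F where F: "F \<in> pmset E W" "{u,y}\<in>F" "{u,y'}\<in>F" by auto
    have "{u,y} \<noteq> {u,y'}" using that(3) by (auto simp: doubleton_eq_iff)
    moreover have P: "\<forall>e1\<in>F. \<forall>e2\<in>F. e1 \<noteq> e2 \<longrightarrow> e1 \<inter> e2 = {}" using F(1) unfolding pmset_def by simp
    ultimately have "{u,y} \<inter> {u,y'} = {}" using bspec[OF bspec[OF P F(2)] F(3)] by blast
    then show False by auto
  qed
  have inner: "(\<Sum>F\<in>{F\<in>pmset E W. {u,y}\<in>F}. x ^ card (F - M)) =
      (if {u,y}\<in>M then 1 else x) * PP E M x (W - {u,y})" if y: "y \<in> N" for y
  proof -
    let ?e = "{u,y}"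
    have eE: "?e \<in> E" and yW: "y \<in> W" using y unfolding N_def by auto
    have bij: "bij_betw (insert ?e) (pmset E (W - ?e)) {F\<in>pmset E W. ?e\<in>F}"
    proof (rule bij_betwI[where g = "\<lambda>F. F - {?e}"])
      show "insert ?e \<in> pmset E (W - ?e) \<rightarrow> {F\<in>pmset E W. ?e\<in>F}"
      proof
        fix F assume F: "F \<in> pmset E (W - ?e)"
        have U: "\<Union>F = W - ?e" and FE: "F \<subseteq> E"
          and P: "\<forall>e1\<in>F. \<forall>e2\<in>F. e1 \<noteq> e2 \<longrightarrow> e1 \<inter> e2 = {}"
          using F unfolding pmset_def by simp_all
        have d1: "?e \<inter> e2 = {}" and d2: "e2 \<inter> ?e = {}" if "e2 \<in> F" for e2
        proof -
          have "e2 \<subseteq> W - ?e" using U that by auto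
          then show "?e \<inter> e2 = {}" "e2 \<inter> ?e = {}" by auto
        qed
        have "insert ?e F \<subseteq> E" "\<Union>(insert ?e F) = W" using FE U eE u yW by auto
        moreover have "\<forall>e1\<in>insert ?e F. \<forall>e2\<in>insert ?e F. e1 \<noteq> e2 \<longrightarrow> e1 \<inter> e2 = {}"
        proof (intro ballI impI)
          fix e1 e2 assume h: "e1 \<in> insert ?e F" "e2 \<in> insert ?e F" "e1 \<noteq> e2"
          show "e1 \<inter> e2 = {}"
          proof (cases "e1 = ?e")
            case True
            then have "e2 \<in> F" using h by auto
            then show ?thesis using d1 True by simp
          next
            case False
            then have e1F: "e1 \<in> F" using h by auto
            show ?thesis
            proof (cases "e2 = ?e")
              case True
              then show ?thesis using d2 e1F by simp
            next
              case False
              then have "e2 \<in> F" using h by auto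
              then show ?thesis using P e1F h(3) by simp
            qed
          qed
        qed
        ultimately show "insert ?e F \<in> {F\<in>pmset E W. ?e\<in>F}"
          unfolding pmset_def by simp
      qed
      show "(\<lambda>F. F - {?e}) \<in> {F\<in>pmset E W. ?e\<in>F} \<rightarrow> pmset E (W - ?e)"
      proof
        fix F assume F: "F \<in> {F\<in>pmset E W. ?e\<in>F}"
        have "\<Union>(F - {?e}) = W - ?e"
        proof
          show "\<Union>(F - {?e}) \<subseteq> W - ?e"
          proof
            fix v assume "v \<in> \<Union>(F - {?e})"
            then obtain e2 where e2: "e2 \<in> F" "e2 \<noteq> ?e" "v \<in> e2" by auto
            have "\<forall>e1\<in>F. \<forall>e2\<in>F. e1 \<noteq> e2 \<longrightarrow> e1 \<inter> e2 = {}" "?e \<in> F" using F unfolding pmset_def by simp_all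
            then have "?e \<inter> e2 = {}" using e2 by simp
            then show "v \<in> W - ?e" using F e2 unfolding pmset_def by auto
          qed
          show "W - ?e \<subseteq> \<Union>(F - {?e})" using F unfolding pmset_def by auto
        qed
        then show "F - {?e} \<in> pmset E (W - ?e)" using F unfolding pmset_def by auto
      qed
      show "insert ?e F - {?e} = F" if "F \<in> pmset E (W - ?e)" for F
      proof -
        have "?e \<notin> F" using that u unfolding pmset_def by auto
        then show ?thesis by simp
      qed
      show "insert ?e (F - {?e}) = F" if "F \<in> {F\<in>pmset E W. ?e\<in>F}" for F
        using that by auto
    qed
    have "(\<Sum>F\<in>{F\<in>pmset E W. ?e\<in>F}. x ^ card (F - M)) =
        (\<Sum>F\<in>pmset E (W - ?e). x ^ card (insert ?e F - M))"
      by (rule sum.reindex_bij_betw[OF bij, symmetric])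
    also have "\<dots> = (\<Sum>F\<in>pmset E (W - ?e). (if ?e\<in>M then 1 else x) * x ^ card (F - M))"
    proof (rule sum.cong[OF refl])
      fix F assume F: "F \<in> pmset E (W - ?e)"
      have "?e \<notin> F" using F u unfolding pmset_def by auto
      have finF: "finite F" using F finE unfolding pmset_def by (auto intro: finite_subset)
      show "x ^ card (insert ?e F - M) = (if ?e\<in>M then 1 else x) * x ^ card (F - M)"
      proof (cases "?e \<in> M")
        case True
        then have "insert ?e F - M = F - M" by auto
        then show ?thesis using True by simp
      next
        case False
        then have "insert ?e F - M = insert ?e (F - M)" by auto
        moreover have "card (insert ?e (F - M)) = Suc (card (F - M))"
          using \<open>?e \<notin> F\<close> finF by simp
        ultimately show ?thesis using False by simp
      qed
    qed
    also have "\<dots> = (if ?e\<in>M then 1 else x) * PP E M x (W - ?e)"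
      unfolding PP_def by (simp add: sum_distrib_left)
    finally show ?thesis .
  qed
  have "PP E M x W = (\<Sum>F\<in>(\<Union>y\<in>N. {F\<in>pmset E W. {u,y}\<in>F}). x ^ card (F - M))"
    unfolding PP_def using cover by simp
  also have "\<dots> = (\<Sum>y\<in>N. \<Sum>F\<in>{F\<in>pmset E W. {u,y}\<in>F}. x ^ card (F - M))"
    by (rule sum.UNION_disjoint) (use finN finP disj in auto)
  also have "\<dots> = (\<Sum>y\<in>N. (if {u,y}\<in>M then 1 else x) * PP E M x (W - {u,y}))"
    using inner by simp
  finally show ?thesis unfolding N_def .
qed


locale pmg =
  fixes V :: "'a set" and E M :: "'a set set" and D :: nat
  assumes finV: "finite V" and edges: "\<forall>e\<in>E. e \<subseteq> V \<and> card e = 2"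
    and degD: "\<forall>v\<in>V. degree E v \<le> D" and pmM: "perfect_matching V E M"
begin

lemma E2: "\<forall>e\<in>E. card e = 2" using edges by auto

lemma finE: "finite E"
proof -
  have "E \<subseteq> Pow V" using edges by auto
  then show ?thesis using finV by (meson finite_Pow_iff finite_subset)
qed

lemma ME: "M \<subseteq> E" using pmM unfolding perfect_matching_def by simp
lemma UM: "\<Union>M = V" using pmM unfolding perfect_matching_def by simp
lemma Mdisj: "e1 \<in> M \<Longrightarrow> e2 \<in> M \<Longrightarrow> e1 \<noteq> e2 \<Longrightarrow> e1 \<inter> e2 = {}"
  using pmM unfolding perfect_matching_def by simp
lemma finM: "finite M" using ME finE by (rule finite_subset)

lemma M_unique: "e1 \<in> M \<Longrightarrow> e2 \<in> M \<Longrightarrow> a \<in> e1 \<Longrightarrow> a \<in> e2 \<Longrightarrow> e1 = e2"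
  using Mdisj by blast

lemma edge_split:
  assumes "e \<in> E" "a \<in> e" obtains a' where "e = {a,a'}" "a \<noteq> a'"
proof -
  have "card e = 2" using assms E2 by auto
  then obtain p q where pq: "e = {p,q}" "p \<noteq> q" by (meson card_2_iff)
  show ?thesis
  proof (cases "a = p")
    case True then show ?thesis using that pq by auto
  next
    case False then have "a = q" using pq assms by auto
    then show ?thesis using that[of p] pq by (auto simp: insert_commute)
  qed
qed

lemma edge_neq: "{a,y} \<in> E \<Longrightarrow> a \<noteq> y"
  using E2 by fastforce

lemma Union_diff:
  assumes "S \<subseteq> M" "T \<subseteq> S" shows "\<Union>(S - T) = \<Union>S - \<Union>T"
proof
  show "\<Union>(S - T) \<subseteq> \<Union>S - \<Union>T"
  proof
    fix v assume "v \<in> \<Union>(S - T)"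
    then obtain e where e: "e \<in> S" "e \<notin> T" "v \<in> e" by auto
    have "v \<notin> \<Union>T"
    proof
      assume "v \<in> \<Union>T"
      then obtain e' where "e' \<in> T" "v \<in> e'" by auto
      then have "e = e'" using M_unique[of e e' v] e assms by auto
      then show False using e \<open>e' \<in> T\<close> by simp
    qed
    then show "v \<in> \<Union>S - \<Union>T" using e by auto
  qed
qed auto

lemma nbr_card:
  assumes "a' \<in> V" "{a,a'} \<in> E" "a \<notin> W"
  shows "card {y\<in>W. {a',y}\<in>E} \<le> D - 1"
proof -
  let ?N = "{y\<in>W. {a',y}\<in>E}"
  have inj: "inj_on (\<lambda>y. {a',y}) ?N" by (auto simp: inj_on_def doubleton_eq_iff)
  have sub: "(\<lambda>y. {a',y}) ` ?N \<subseteq> {e\<in>E. a' \<in> e} - {{a,a'}}"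
    using assms(3) by (auto simp: doubleton_eq_iff)
  have fin: "finite ({e\<in>E. a' \<in> e} - {{a,a'}})" using finE by simp
  have "card ?N \<le> card ({e\<in>E. a' \<in> e} - {{a,a'}})"
    using card_inj_on_le[OF inj sub fin] .
  also have "\<dots> = card {e\<in>E. a' \<in> e} - 1"
    using assms(2) finE by (subst card_Diff_singleton) auto
  also have "\<dots> \<le> D - 1" using degD assms(1) unfolding degree_def by (simp add: diff_le_mono)
  finally show ?thesis .
qed


lemma sum_bound:
  fixes f :: "'b \<Rightarrow> complex"
  assumes "finite N" "\<And>y. y \<in> N \<Longrightarrow> norm (f y) \<le> c" "card N \<le> D - 1" "c \<ge> 0"
  shows "norm (sum f N) \<le> real (D - 1) * c"
proof -
  have "norm (sum f N) \<le> (\<Sum>y\<in>N. c)" by (rule sum_norm_le) (use assms in auto)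
  also have "\<dots> = real (card N) * c" by simp
  also have "\<dots> \<le> real (D - 1) * c" using assms(3,4) by (intro mult_right_mono) auto
  finally show ?thesis .
qed

lemma finN: "finite {y\<in>W. {u,y}\<in>E}"
proof -
  have "{y\<in>W. {u,y}\<in>E} \<subseteq> V" using edges by auto
  then show ?thesis using finV by (rule finite_subset)
qed

definition I1 :: "complex \<Rightarrow> 'a set set \<Rightarrow> bool" where
  "I1 x S \<longleftrightarrow> (\<forall>e\<in>S. norm (PP E M x (\<Union>(S - {e}))) \<le> 2 * norm (PP E M x (\<Union>S)))"

definition I2 :: "complex \<Rightarrow> 'a set set \<Rightarrow> bool" where
  "I2 x S \<longleftrightarrow> (\<forall>e f a b. e\<in>S \<longrightarrow> f\<in>S \<longrightarrow> e\<noteq>f \<longrightarrow> a\<in>e \<longrightarrow> b\<in>f \<longrightarrow>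
     norm (PP E M x (\<Union>S - {a,b})) \<le> real (D - 1) * norm x * norm (PP E M x (\<Union>(S - {e,f}))))"

lemma I2D: "I2 x S \<Longrightarrow> e\<in>S \<Longrightarrow> f\<in>S \<Longrightarrow> e\<noteq>f \<Longrightarrow> a\<in>e \<Longrightarrow> b\<in>f \<Longrightarrow>
     norm (PP E M x (\<Union>S - {a,b})) \<le> real (D - 1) * norm x * norm (PP E M x (\<Union>(S - {e,f})))"
  unfolding I2_def by blast

lemma I1D: "I1 x S \<Longrightarrow> e\<in>S \<Longrightarrow> norm (PP E M x (\<Union>(S - {e}))) \<le> 2 * norm (PP E M x (\<Union>S))"
  unfolding I1_def by blast

lemma main_ind:
  assumes sx: "real (D - 1) * norm x \<le> 1/2"
  shows "S \<subseteq> M \<Longrightarrow> card S = n \<Longrightarrow> I2 x S \<and> I1 x S"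
proof (induction n arbitrary: S rule: less_induct)
  case (less n S)
  define s where "s = real (D - 1) * norm x"
  have s0: "s \<ge> 0" unfolding s_def by simp
  have s2: "2 * s \<le> 1" using sx unfolding s_def by simp
  have finS: "finite S" using less.prems(1) finM by (rule finite_subset)
  have IH: "I2 x S' \<and> I1 x S'" if "S' \<subseteq> S" "S' \<noteq> S" for S'
  proof -
    have "card S' < card S" using that finS by (meson psubsetI psubset_card_mono)
    then show ?thesis using less.IH[of "card S'" S'] less.prems that by auto
  qed
  have SE: "S \<subseteq> E" using less.prems(1) ME by auto
  have i2: "I2 x S"
    unfolding I2_def
  proof (intro allI impI)
    fix e f a b assume e: "e \<in> S" and f: "f \<in> S" and ef: "e \<noteq> f" and a: "a \<in> e" and b: "b \<in> f"
    obtain a' where ea: "e = {a,a'}" "a \<noteq> a'" using edge_split[of e a] e a SE by auto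
    obtain b' where fb: "f = {b,b'}" "b \<noteq> b'" using edge_split[of f b] f b SE by auto
    have eM: "e \<in> M" and fM: "f \<in> M" using e f less.prems(1) by auto
    have dj: "e \<inter> f = {}" using Mdisj[OF eM fM ef] .
    define W where "W = \<Union>S - {a,b}"
    define Z' where "Z' = norm (PP E M x (\<Union>(S - {e,f})))"
    have a'W: "a' \<in> W" using ea e dj fb unfolding W_def by auto
    have a'V: "a' \<in> V" using ea eM UM by auto
    have aW: "a \<notin> W" unfolding W_def by simp
    have rec: "PP E M x W = (\<Sum>y\<in>{y\<in>W. {a',y}\<in>E}. (if {a',y}\<in>M then 1 else x) * PP E M x (W - {a',y}))"
      by (rule PP_rec[OF finE E2 a'W])
    have tm: "norm ((if {a',y}\<in>M then 1 else x) * PP E M x (W - {a',y})) \<le> norm x * Z'"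
      if y: "y \<in> {y\<in>W. {a',y}\<in>E}" for y
    proof -
      have yW: "y \<in> W" and yE: "{a',y} \<in> E" using y by auto
      have ya': "y \<noteq> a'" using edge_neq[OF yE] by simp
      have ya: "y \<noteq> a" using yW aW by auto
      have notM: "{a',y} \<notin> M"
      proof
        assume "{a',y} \<in> M"
        then have "{a',y} = e" using M_unique[of "{a',y}" e a'] eM ea by auto
        then show False using ya ya' ea by auto
      qed
      obtain g where g: "g \<in> S" "y \<in> g" using yW unfolding W_def by auto
      have ge: "g \<noteq> e" using g ya ya' ea by auto
      have bound: "norm (PP E M x (W - {a',y})) \<le> Z'"
      proof (cases "g = f")
        case True
        then have yb': "y = b'" using g fb yW unfolding W_def by auto
        have "W - {a',y} = \<Union>S - \<Union>{e,f}" unfolding W_def using ea fb yb' by auto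
        also have "\<dots> = \<Union>(S - {e,f})" using Union_diff[of S "{e,f}"] less.prems(1) e f by auto
        finally show ?thesis unfolding Z'_def by simp
      next
        case False
        have S1: "S - {e} \<subseteq> S" "S - {e} \<noteq> S" using e by auto
        have "I2 x (S - {e})" using IH[OF S1] by simp
        then have h1: "norm (PP E M x (\<Union>(S - {e}) - {b,y})) \<le> s * norm (PP E M x (\<Union>(S - {e} - {f,g})))"
          unfolding s_def by (rule I2D) (use f g ef ge False b g in auto)
        have eq1: "\<Union>(S - {e}) - {b,y} = W - {a',y}"
        proof -
          have "\<Union>(S - {e}) = \<Union>S - \<Union>{e}" using Union_diff[of S "{e}"] less.prems(1) e by auto
          then show ?thesis unfolding W_def using ea by auto
        qed
        have S2: "S - {e,f} \<subseteq> S" "S - {e,f} \<noteq> S" using e by auto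
        have "I1 x (S - {e,f})" using IH[OF S2] by simp
        then have h2: "norm (PP E M x (\<Union>(S - {e,f} - {g}))) \<le> 2 * Z'"
          unfolding I1_def Z'_def using g ge False by auto
        have eq2: "S - {e} - {f,g} = S - {e,f} - {g}" by auto
        have "norm (PP E M x (W - {a',y})) \<le> s * (2 * Z')"
          using order_trans[OF h1 mult_left_mono[OF h2[folded eq2] s0]] unfolding eq1 .
        also have "\<dots> \<le> Z'"
        proof -
          have "Z' \<ge> 0" unfolding Z'_def by simp
          then have "(2 * s) * Z' \<le> 1 * Z'" using s2 by (intro mult_right_mono) auto
          then show ?thesis by (simp add: mult.assoc)
        qed
        finally show ?thesis .
      qed
      show ?thesis using notM bound by (simp add: norm_mult mult_left_mono)
    qed
    have "norm (PP E M x W) \<le> real (D - 1) * (norm x * Z')"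
      unfolding rec by (rule sum_bound[OF finN tm nbr_card[OF a'V _ aW]]) (use ea e SE Z'_def in auto)
    then show "norm (PP E M x (\<Union>S - {a,b})) \<le> real (D - 1) * norm x * norm (PP E M x (\<Union>(S - {e,f})))"
      unfolding W_def Z'_def by (simp add: mult.assoc)
  qed
  have i1: "I1 x S"
    unfolding I1_def
  proof
    fix e assume e: "e \<in> S"
    have eM: "e \<in> M" using e less.prems(1) by auto
    have "e \<in> E" using eM ME by auto
    obtain u where "u \<in> e" using E2 \<open>e \<in> E\<close> by (metis all_not_in_conv card.empty zero_neq_numeral)
    then obtain v where uv: "e = {u,v}" "u \<noteq> v" using edge_split[of e u] \<open>e \<in> E\<close> by auto
    define W where "W = \<Union>S"
    define Z1 where "Z1 = norm (PP E M x (\<Union>(S - {e})))"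
    define N where "N = {y\<in>W. {u,y}\<in>E}"
    have uW: "u \<in> W" using e uv unfolding W_def by auto
    have vN: "v \<in> N" using e uv \<open>e \<in> E\<close> unfolding N_def W_def by auto
    have uV: "u \<in> V" using eM uv UM by auto
    have rec: "PP E M x W = (\<Sum>y\<in>N. (if {u,y}\<in>M then 1 else x) * PP E M x (W - {u,y}))"
      unfolding N_def by (rule PP_rec[OF finE E2 uW])
    also have "\<dots> = (if {u,v}\<in>M then 1 else x) * PP E M x (W - {u,v}) +
        (\<Sum>y\<in>N - {v}. (if {u,y}\<in>M then 1 else x) * PP E M x (W - {u,y}))"
      using vN finN unfolding N_def by (subst sum.remove) auto
    also have "(if {u,v}\<in>M then 1 else x) * PP E M x (W - {u,v}) = PP E M x (\<Union>(S - {e}))"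
    proof -
      have "\<Union>(S - {e}) = \<Union>S - \<Union>{e}" using Union_diff[of S "{e}"] less.prems(1) e by auto
      then show ?thesis using eM uv unfolding W_def by simp
    qed
    finally have dec: "PP E M x W = PP E M x (\<Union>(S - {e})) +
        (\<Sum>y\<in>N - {v}. (if {u,y}\<in>M then 1 else x) * PP E M x (W - {u,y}))" .
    have tm: "norm ((if {u,y}\<in>M then 1 else x) * PP E M x (W - {u,y})) \<le> norm x * (2 * s * Z1)"
      if y: "y \<in> N - {v}" for y
    proof -
      have yW: "y \<in> W" and yE: "{u,y} \<in> E" and yv: "y \<noteq> v" using y unfolding N_def by auto
      have yu: "y \<noteq> u" using edge_neq[OF yE] by simp
      have notM: "{u,y} \<notin> M"
      proof
        assume "{u,y} \<in> M"
        then have "{u,y} = e" using M_unique[of "{u,y}" e u] eM uv by auto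
        then show False using yu yv uv by (auto simp: doubleton_eq_iff)
      qed
      obtain g where g: "g \<in> S" "y \<in> g" using yW unfolding W_def by auto
      have ge: "g \<noteq> e" using g yu yv uv by auto
      have h1: "norm (PP E M x (\<Union>S - {u,y})) \<le> s * norm (PP E M x (\<Union>(S - {e,g})))"
        unfolding s_def by (rule I2D[OF i2 e g(1) ge[symmetric] \<open>u \<in> e\<close> g(2)])
      have S1: "S - {e} \<subseteq> S" "S - {e} \<noteq> S" using e by auto
      have "I1 x (S - {e})" using IH[OF S1] by simp
      then have h2: "norm (PP E M x (\<Union>(S - {e} - {g}))) \<le> 2 * Z1"
        unfolding I1_def Z1_def using g ge by auto
      have eq2: "S - {e} - {g} = S - {e,g}" by auto
      have "norm (PP E M x (W - {u,y})) \<le> s * (2 * Z1)"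
        using order_trans[OF h1 mult_left_mono[OF h2[unfolded eq2] s0]] unfolding W_def .
      then show ?thesis using notM by (simp add: norm_mult mult_left_mono mult.assoc)
    qed
    have NV: "N - {v} = {y\<in>W - {v}. {u,y}\<in>E}" unfolding N_def by auto
    have "norm (\<Sum>y\<in>N - {v}. (if {u,y}\<in>M then 1 else x) * PP E M x (W - {u,y})) \<le> real (D - 1) * (norm x * (2 * s * Z1))"
      unfolding NV
    proof (rule sum_bound[OF finN])
      show "card {y \<in> W - {v}. {u, y} \<in> E} \<le> D - 1"
        by (rule nbr_card[OF uV]) (use uv \<open>e \<in> E\<close> in \<open>auto simp: insert_commute\<close>)
    qed (use tm NV s0 Z1_def in auto)
    also have "\<dots> = 2 * s * s * Z1" unfolding s_def by simp
    also have "\<dots> \<le> Z1 / 2"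
    proof -
      have "s \<le> 1/2" using s2 by simp
      then have "s * s \<le> 1/2 * (1/2)" using s0 by (intro mult_mono) auto
      moreover have "Z1 \<ge> 0" unfolding Z1_def by simp
      ultimately have "(s * s) * Z1 \<le> (1/4) * Z1" by (intro mult_right_mono) auto
      then show ?thesis by (simp add: mult.assoc)
    qed
    finally have small: "norm (\<Sum>y\<in>N - {v}. (if {u,y}\<in>M then 1 else x) * PP E M x (W - {u,y})) \<le> Z1 / 2" .
    have "Z1 \<le> norm (PP E M x W) + norm (\<Sum>y\<in>N - {v}. (if {u,y}\<in>M then 1 else x) * PP E M x (W - {u,y}))"
    proof -
      have "PP E M x (\<Union>(S - {e})) = PP E M x W - (\<Sum>y\<in>N - {v}. (if {u,y}\<in>M then 1 else x) * PP E M x (W - {u,y}))"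
        using dec by simp
      then show ?thesis unfolding Z1_def by (simp only: norm_triangle_ineq4)
    qed
    then show "norm (PP E M x (\<Union>(S - {e}))) \<le> 2 * norm (PP E M x (\<Union>S))"
      using small unfolding Z1_def W_def by linarith
  qed
  show ?case using i1 i2 by simp
qed


lemma PP_nonzero:
  assumes sx: "real (D - 1) * norm x \<le> 1/2"
  shows "PP E M x V \<noteq> 0"
proof -
  have "S \<subseteq> M \<longrightarrow> PP E M x (\<Union>S) \<noteq> 0" if "finite S" for S
    using that
  proof (induction S rule: finite_induct)
    case empty
    then show ?case using PP_empty[OF E2] by simp
  next
    case (insert e S)
    show ?case
    proof
      assume sub: "insert e S \<subseteq> M"
      then have "PP E M x (\<Union>S) \<noteq> 0" using insert by auto
      moreover have "I1 x (insert e S)" using main_ind[OF sx sub refl] by simp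
      then have "norm (PP E M x (\<Union>(insert e S - {e}))) \<le> 2 * norm (PP E M x (\<Union>(insert e S)))"
        by (rule I1D) simp
      moreover have "insert e S - {e} = S" using insert by auto
      ultimately have "norm (PP E M x (\<Union>S)) \<le> 2 * norm (PP E M x (\<Union>(insert e S)))" by simp
      moreover have "norm (PP E M x (\<Union>S)) > 0" using \<open>PP E M x (\<Union>S) \<noteq> 0\<close> by simp
      ultimately show "PP E M x (\<Union>(insert e S)) \<noteq> 0" by (intro notI) simp
    qed
  qed
  from this[OF finM] have "PP E M x (\<Union>M) \<noteq> 0" by simp
  then show ?thesis using UM by simp
qed

lemma card_pm:
  assumes "F \<in> pmset E W" shows "card W = 2 * card F"
proof -
  have F: "F \<subseteq> E" "\<forall>e1\<in>F. \<forall>e2\<in>F. e1 \<noteq> e2 \<longrightarrow> e1 \<inter> e2 = {}" "\<Union>F = W"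
    using assms unfolding pmset_def by simp_all
  have "pairwise disjnt F" using F(2) unfolding pairwise_def disjnt_def by simp
  moreover have "\<And>A. A \<in> F \<Longrightarrow> finite A"
  proof -
    fix A assume "A \<in> F"
    then have "card A = 2" using F(1) E2 by auto
    then show "finite A" by (intro card_ge_0_finite) simp
  qed
  ultimately have "card (\<Union>F) = sum card F" by (rule card_Union_disjoint)
  also have "\<dots> = (\<Sum>e\<in>F. 2)" using F(1) E2 by (intro sum.cong) auto
  also have "\<dots> = 2 * card F" by simp
  finally show ?thesis using F(3) by simp
qed

lemma Zpm_PP: "Zpm V E M z = PP E M (z^2) V"
proof -
  have set_eq: "{M'. perfect_matching V E M'} = pmset E V"
    unfolding perfect_matching_def pmset_def by auto
  have "M \<in> pmset E V" using pmM set_eq by auto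
  have "z ^ card (M - M' \<union> (M' - M)) = (z^2) ^ card (M' - M)" if M': "M' \<in> pmset E V" for M'
  proof -
    have finM': "finite M'" using M' finE unfolding pmset_def by (auto intro: finite_subset)
    have "card M = card M'" using card_pm[OF M'] card_pm[OF \<open>M \<in> pmset E V\<close>] by simp
    then have c: "card (M - M') = card (M' - M)"
      using finM finM' by (simp add: card_Diff_subset_Int Int_commute)
    have "card (M - M' \<union> (M' - M)) = card (M - M') + card (M' - M)"
      using finM finM' by (intro card_Un_disjoint) auto
    then show ?thesis using c by (simp add: power_mult[symmetric] mult_2)
  qed
  then show ?thesis unfolding Zpm_def PP_def set_eq by (intro sum.cong) auto
qed

lemma Zpm_0: "Zpm V E M 0 = 1"
  unfolding Zpm_PP
proof -
  have "PP E M 0 V = (\<Sum>F\<in>pmset E V. if F = M then 1 else 0)"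
    unfolding PP_def
  proof (intro sum.cong refl)
    fix F assume F: "F \<in> pmset E V"
    have finF: "finite F" using F finE unfolding pmset_def by (auto intro: finite_subset)
    have "M \<in> pmset E V" using pmM unfolding perfect_matching_def pmset_def by auto
    have cc: "card M = card F" using card_pm[OF F] card_pm[OF \<open>M \<in> pmset E V\<close>] by simp
    have "F - M = {} \<longleftrightarrow> F = M"
    proof
      assume "F - M = {}"
      then have "F \<subseteq> M" by auto
      then show "F = M" by (rule card_subset_eq[OF finM]) (use cc in simp)
    qed auto
    then show "(0::complex) ^ card (F - M) = (if F = M then 1 else 0)"
      using finF by (auto simp: card_eq_0_iff)
  qed
  also have "\<dots> = 1"
  proof -
    have "M \<in> pmset E V" using pmM unfolding perfect_matching_def pmset_def by auto
    moreover have "finite (pmset E V)" by (rule finite_pmset[OF finE])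
    ultimately show ?thesis by (subst sum.delta) auto
  qed
  finally show "PP E M (0^2) V = 1" by simp
qed

end


theorem mainTheorem19:
  fixes V :: "'a set" and E M :: "'a set set" and D :: nat and z :: complex
  assumes "D \<ge> 2"
    and "simple_graph V E"
    and "max_degree_eq V E D"
    and "perfect_matching V E M"
    and "norm z \<le> sqrt ((3 - sqrt 5) / (2 * (real D - 1) * exp ((sqrt 5 - 1) / 2)))"
  shows "Zpm V E M z \<noteq> 0 \<and> summable (\<lambda>n. norm (log_Zpm_coeff V E M n * z ^ n))"
proof -
  interpret pmg V E M D
    using assms(2,3,4) unfolding simple_graph_def max_degree_eq_def by unfold_locales auto
  define c where "c = (sqrt 5 - 1) / 2"
  define R where "R = sqrt (1 / (2 * (real D - 1)))"
  have D1: "real D - 1 \<ge> 1" using assms(1) by simp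
  have RD: "real (D - 1) = real D - 1" using assms(1) by simp
  have Rpos: "R > 0" unfolding R_def using D1 by simp
  have zR: "norm z < R"
  proof -
    have s5: "sqrt 5 > 2" by (rule real_less_rsqrt) simp
    then have c0: "c \<ge> 0" unfolding c_def by simp
    have "exp c \<ge> 1" using c0 by simp
    then have "(3 - sqrt 5) < exp c" using s5 by linarith
    then have "(3 - sqrt 5) / exp c < 1" by simp
    then have "(3 - sqrt 5) / exp c / (2 * (real D - 1)) < 1 / (2 * (real D - 1))"
      using D1 by (intro divide_strict_right_mono) auto
    then have "(3 - sqrt 5) / (2 * (real D - 1) * exp c) < 1 / (2 * (real D - 1))"
      by (simp add: field_simps)
    then have "sqrt ((3 - sqrt 5) / (2 * (real D - 1) * exp c)) < R"
      unfolding R_def by simp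
    then show ?thesis using assms(5) unfolding c_def by simp
  qed
  have nz: "Zpm V E M w \<noteq> 0" if w: "w \<in> ball 0 R" for w
  proof -
    have "norm w < R" using w by simp
    then have "norm w ^ 2 < R ^ 2" by (intro power_strict_mono) auto
    also have "R ^ 2 = 1 / (2 * (real D - 1))" unfolding R_def using D1 by simp
    finally have "(real D - 1) * norm w ^ 2 < (real D - 1) * (1 / (2 * (real D - 1)))"
      using D1 by (intro mult_strict_left_mono) auto
    also have "\<dots> = 1/2" using D1 by simp
    finally have "real (D - 1) * norm (w^2) \<le> 1/2" unfolding RD by (simp add: norm_power)
    then show ?thesis unfolding Zpm_PP by (rule PP_nonzero)
  qed
  have part1: "Zpm V E M z \<noteq> 0" using nz zR by simp
  define f where "f = Zpm V E M"
  have holf: "f holomorphic_on ball 0 R"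
    unfolding f_def Zpm_def by (intro holomorphic_intros)
  obtain g where holg: "g holomorphic_on ball 0 R" and expg: "\<And>w. w \<in> ball 0 R \<Longrightarrow> exp (g w) = f w"
    using holomorphic_logarithm_exists[of "ball 0 R" f 0] holf nz Rpos unfolding f_def by auto
  define h where "h = (\<lambda>w. g w - g 0)"
  have holh: "h holomorphic_on ball 0 R" unfolding h_def by (intro holomorphic_intros holg)
  have f0: "f 0 = 1" unfolding f_def by (rule Zpm_0)
  have exph: "exp (h w) = f w" if "w \<in> ball 0 R" for w
    using expg[OF that] expg[of 0] Rpos f0 unfolding h_def by (simp add: exp_diff)
  have h0: "h 0 = 0" unfolding h_def by simp
  have conth: "continuous_on (ball 0 R) h" using holh by (rule holomorphic_on_imp_continuous_on)
  define U where "U = ball 0 R \<inter> h -` ball 0 pi"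
  have openU: "open U" unfolding U_def by (rule continuous_open_preimage[OF conth]) auto
  have U0: "0 \<in> U" unfolding U_def using Rpos h0 by simp
  have LnU: "Ln (f w) = h w" if "w \<in> U" for w
  proof -
    have wb: "w \<in> ball 0 R" and hw: "norm (h w) < pi" using that unfolding U_def by auto
    have "\<bar>Im (h w)\<bar> < pi" using abs_Im_le_cmod[of "h w"] hw by linarith
    then have "Ln (exp (h w)) = h w" by (intro Ln_exp) auto
    then show ?thesis using exph[OF wb] by simp
  qed
  have ev: "eventually (\<lambda>w. Ln (Zpm V E M w) = h w) (nhds 0)"
    unfolding eventually_nhds using openU U0 LnU unfolding f_def by blast
  have coeff: "log_Zpm_coeff V E M n = (deriv ^^ n) h 0 / fact n" for n
    unfolding log_Zpm_coeff_def using higher_deriv_cong_ev[OF ev refl] by simp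
  define \<rho> where "\<rho> = (norm z + R) / 2"
  have rho: "norm z < \<rho>" "\<rho> < R" unfolding \<rho>_def using zR by auto
  have "(\<lambda>n. (deriv ^^ n) h 0 / fact n * (complex_of_real \<rho> - 0) ^ n) sums h (complex_of_real \<rho>)"
  proof (rule holomorphic_power_series[OF holh])
    have "\<rho> > 0" using rho(1) norm_ge_zero[of z] by linarith
    then show "complex_of_real \<rho> \<in> ball 0 R" using rho(2) by simp
  qed
  then have "summable (\<lambda>n. (deriv ^^ n) h 0 / fact n * (complex_of_real \<rho>) ^ n)"
    by (simp add: sums_summable)
  then have "summable (\<lambda>n. norm ((deriv ^^ n) h 0 / fact n * z ^ n))"
    by (rule powser_insidea) (use rho norm_ge_zero[of z] in auto)
  then show ?thesis using part1 coeff by simp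
qed

end
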